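(* Let $\widetilde\nabla$ be the canonical snm-connection on $\mathbb R^3$ determined by $\mathsf C=\partial_z$. There exist $\varepsilon>0$ and a function $f:[0,\varepsilon)\to\mathbb R$, smooth up to $0$, with $f'(0)=0$, such that the rotational surface about the $z$-axis generated by the graph $z=f(x)$, $0<x<\varepsilon$, namely $\{(x\cos t,x\sin t,f(x)):0<x<\varepsilon,\ t\in\mathbb R\}$, has constant sectional curvature $K\equiv\tfrac12$ with respect to $\widetilde\nabla$; in particular its closure meets the rotation axis orthogonally.
   Context: Let $\langle\cdot,\cdot\rangle$ be the Euclidean metric on $\mathbb R^3$ and $\widetilde\nabla^0$ its Levi-Civita connection (the ordinary directional derivative). Given a smooth vector field $\mathsf C$ on $\mathbb R^3$, the semi-symmetric non-metric connection (snm-connection) determined by $\mathsf C$ is $\widetilde\nabla_XY=\widetilde\nabla^0_XY+\langle \mathsf C,Y\rangle X$. Its curvature tensor is $\widetilde R(X,Y)Z=\widetilde\nabla_X\widetilde\nabla_YZ-\widetilde\nabla_Y\widetilde\nabla_XZ-\widetilde\nabla_{[X,Y]}Z$. For a surface $M$ immersed in $\mathbb R^3$, the induced connection is $\nabla_XY=(\widetilde\nabla_XY)^{\top}$ (tangential component), with curvature tensor $R$ defined by the same formula, and the sectional curvature of $M$ with respect to $\widetilde\nabla$ at $p$ is $K(p)=\frac12\big(\langle R(e_1,e_2)e_2,e_1\rangle+\langle R(e_2,e_1)e_1,e_2\rangle\big)$ for an orthonormal basis $\{e_1,e_2\}$ of $T_pM$. *)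

theory Defs
  imports "HOL-Analysis.Analysis" "HOL-Analysis.Cross3"
begin

text \<open>
  The ambient snm-connection is
    nabla~_Y W = D_Y W + <C, W> Y,
  and the induced connection is its tangential part.
\<close>

definition pd1 :: "(real \<Rightarrow> real \<Rightarrow> real^3) \<Rightarrow> real \<Rightarrow> real \<Rightarrow> real^3" where
  "pd1 F u v = vector_derivative (\<lambda>s. F s v) (at u)"

definition pd2 :: "(real \<Rightarrow> real \<Rightarrow> real^3) \<Rightarrow> real \<Rightarrow> real \<Rightarrow> real^3" where
  "pd2 F u v = vector_derivative (\<lambda>s. F u s) (at v)"

definition unit_normal :: "(real \<Rightarrow> real \<Rightarrow> real^3) \<Rightarrow> real \<Rightarrow> real \<Rightarrow> real^3" where
  "unit_normal X u v = (1 / norm (cross3 (pd1 X u v) (pd2 X u v))) *\<^sub>R cross3 (pd1 X u v) (pd2 X u v)"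

definition tang :: "(real \<Rightarrow> real \<Rightarrow> real^3) \<Rightarrow> real \<Rightarrow> real \<Rightarrow> real^3 \<Rightarrow> real^3" where
  "tang X u v w = w - (w \<bullet> unit_normal X u v) *\<^sub>R unit_normal X u v"

definition coord_field :: "(real \<Rightarrow> real \<Rightarrow> real^3) \<Rightarrow> real \<Rightarrow> real \<Rightarrow> real \<Rightarrow> real \<Rightarrow> real^3" where
  "coord_field X a b = (\<lambda>u v. a *\<^sub>R pd1 X u v + b *\<^sub>R pd2 X u v)"

definition ind_conn ::
  "(real^3 \<Rightarrow> real^3) \<Rightarrow> (real \<Rightarrow> real \<Rightarrow> real^3) \<Rightarrow> real \<Rightarrow> real \<Rightarrow>
     (real \<Rightarrow> real \<Rightarrow> real^3) \<Rightarrow> real \<Rightarrow> real \<Rightarrow> real^3" where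
  "ind_conn C X a b W = (\<lambda>u v.
      tang X u v (a *\<^sub>R pd1 W u v + b *\<^sub>R pd2 W u v
                  + (C (X u v) \<bullet> W u v) *\<^sub>R coord_field X a b u v))"

text \<open>Curvature R(Y,Z)W = nabla_Y nabla_Z W - nabla_Z nabla_Y W - nabla_[Y,Z] W for the
  commuting fields Y = a X_u + b X_v, Z = c X_u + d X_v (so [Y,Z] = 0).  By tensoriality its
  value at a point only depends on the values of Y, Z, W there.\<close>
definition ind_curv ::
  "(real^3 \<Rightarrow> real^3) \<Rightarrow> (real \<Rightarrow> real \<Rightarrow> real^3) \<Rightarrow> real \<Rightarrow> real \<Rightarrow> real \<Rightarrow> real \<Rightarrow>
     (real \<Rightarrow> real \<Rightarrow> real^3) \<Rightarrow> real \<Rightarrow> real \<Rightarrow> real^3" where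
  "ind_curv C X a b c d W =
     (\<lambda>u v. ind_conn C X a b (ind_conn C X c d W) u v - ind_conn C X c d (ind_conn C X a b W) u v)"

definition sect_curv_expr ::
  "(real^3 \<Rightarrow> real^3) \<Rightarrow> (real \<Rightarrow> real \<Rightarrow> real^3) \<Rightarrow> real \<Rightarrow> real \<Rightarrow> real \<Rightarrow> real \<Rightarrow> real \<Rightarrow> real \<Rightarrow> real" where
  "sect_curv_expr C X a b c d u v =
     (1/2) * (ind_curv C X a b c d (coord_field X c d) u v \<bullet> coord_field X a b u v
            + ind_curv C X c d a b (coord_field X a b) u v \<bullet> coord_field X c d u v)"

definition const_sect_curv ::
  "(real^3 \<Rightarrow> real^3) \<Rightarrow> (real \<Rightarrow> real \<Rightarrow> real^3) \<Rightarrow> (real \<times> real) set \<Rightarrow> real \<Rightarrow> bool" where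
  "const_sect_curv C X U k \<longleftrightarrow>
     (\<forall>(u,v)\<in>U. \<forall>a b c d.
        (coord_field X a b u v \<bullet> coord_field X a b u v = 1 \<and>
         coord_field X c d u v \<bullet> coord_field X c d u v = 1 \<and>
         coord_field X a b u v \<bullet> coord_field X c d u v = 0)
        \<longrightarrow> sect_curv_expr C X a b c d u v = k)"

definition e_z :: "real^3 \<Rightarrow> real^3" where
  "e_z p = vector [0, 0, 1]"

definition rot_surface :: "(real \<Rightarrow> real) \<Rightarrow> real \<Rightarrow> real \<Rightarrow> real^3" where
  "rot_surface f x t = vector [x * cos t, x * sin t, f x]"

definition smooth_upto0 :: "real \<Rightarrow> (real \<Rightarrow> real) \<Rightarrow> (nat \<Rightarrow> real \<Rightarrow> real) \<Rightarrow> bool" where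
  "smooth_upto0 eps f Df \<longleftrightarrow>
     (\<forall>x\<in>{0..<eps}. Df 0 x = f x) \<and>
     (\<forall>n. \<forall>x\<in>{0..<eps}. (Df n has_real_derivative Df (Suc n) x) (at x within {0..<eps}))"

end

theory Submission
  imports Defs
begin

definition aa :: real where "aa = (1 - sqrt 3)/2"
definition conv :: "(nat \<Rightarrow> real) \<Rightarrow> (nat \<Rightarrow> real) \<Rightarrow> nat \<Rightarrow> real" where
  "conv u v n = (\<Sum>i\<le>n. u i * v (n - i))"
definition Ecoef :: "(nat \<Rightarrow> real) \<Rightarrow> nat \<Rightarrow> real" where
  "Ecoef c n = conv (\<lambda>k. real (k+1) * c (k+1)) (\<lambda>k. 2 * c k - (if k = 1 then 1 else 0)) n
     - conv (\<lambda>k. c k + (if k=1 then 1 else 0)) (\<lambda>k. (if k=0 then 1 else 0) + conv c c k) n"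
definition trunc :: "(nat \<Rightarrow> real) \<Rightarrow> nat \<Rightarrow> nat \<Rightarrow> real" where
  "trunc c n = (\<lambda>k. if k < n then c k else 0)"

lemma conv_trunc_eq:
  assumes "c 0 = 0" "m \<le> n"
  shows "conv c c m = conv (trunc c n) (trunc c n) m"
  unfolding conv_def
proof (rule sum.cong[OF refl])
  fix i assume "i \<in> {..m}"
  then show "c i * c (m - i) = trunc c n i * trunc c n (m - i)"
    using assms by (cases "i = 0"; cases "i = n") (auto simp: trunc_def)
qed

lemma conv_diff: "conv u v n - conv u' v' n = (\<Sum>i\<le>n. u i * v (n-i) - u' i * v' (n-i))"
  by (simp add: conv_def sum_subtractf)

lemma E_split:
  assumes c0: "c 0 = 0" and c1: "c 1 = aa" and n: "2 \<le> n"
  shows "Ecoef c n = Ecoef (trunc c n) n + real(n+1)*(2*aa-1)*c n"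
proof -
  let ?t = "trunc c n"
  have A: "conv (\<lambda>k. real (k+1) * c (k+1)) (\<lambda>k. 2 * c k - (if k = 1 then 1 else 0)) n
         - conv (\<lambda>k. real (k+1) * ?t (k+1)) (\<lambda>k. 2 * ?t k - (if k = 1 then 1 else 0)) n
         = 2*aa*c n + real n * c n * (2*aa-1)"
  proof -
    have "conv (\<lambda>k. real (k+1) * c (k+1)) (\<lambda>k. 2 * c k - (if k = 1 then 1 else 0)) n
         - conv (\<lambda>k. real (k+1) * ?t (k+1)) (\<lambda>k. 2 * ?t k - (if k = 1 then 1 else 0)) n
        = (\<Sum>i\<le>n. (if i = 0 then 2*aa*c n else 0) + (if i = n - 1 then real n * c n * (2*aa-1) else 0))"
      unfolding conv_def sum_subtractf[symmetric]
    proof (rule sum.cong[OF refl])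
      fix i assume i: "i \<in> {..n}"
      consider "i = 0" | "i = n - 1" | "i = n" | "0 < i" "i < n - 1" using i by force
      then show "real (i + 1) * c (i + 1) * (2 * c (n - i) - (if n - i = 1 then 1 else 0)) -
          real (i + 1) * ?t (i + 1) * (2 * ?t (n - i) - (if n - i = 1 then 1 else 0)) =
          (if i = 0 then 2 * aa * c n else 0) + (if i = n - 1 then real n * c n * (2 * aa - 1) else 0)"
      proof cases
        case 1 then show ?thesis using n c1 by (auto simp: trunc_def)
      next
        case 2 then have "n - i = 1" "i + 1 = n" using n by auto
        then show ?thesis using 2 n c1 by (auto simp: trunc_def algebra_simps)
      next
        case 3 then show ?thesis using n c0 by (auto simp: trunc_def)
      next
        case 4 then show ?thesis using n by (auto simp: trunc_def)
      qed
    qed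
    also have "\<dots> = 2*aa*c n + real n * c n * (2*aa-1)"
      using n by (simp add: sum.distrib)
    finally show ?thesis .
  qed
  have B: "conv (\<lambda>k. c k + (if k=1 then 1 else 0)) (\<lambda>k. (if k=0 then 1 else 0) + conv c c k) n
      - conv (\<lambda>k. ?t k + (if k=1 then 1 else 0)) (\<lambda>k. (if k=0 then 1 else 0) + conv ?t ?t k) n
      = c n"
  proof -
    have "conv (\<lambda>k. c k + (if k=1 then 1 else 0)) (\<lambda>k. (if k=0 then 1 else 0) + conv c c k) n
      - conv (\<lambda>k. ?t k + (if k=1 then 1 else 0)) (\<lambda>k. (if k=0 then 1 else 0) + conv ?t ?t k) n
      = (\<Sum>i\<le>n. if i = n then c n else 0)"
      unfolding conv_diff
    proof (rule sum.cong[OF refl])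
      fix i assume i: "i \<in> {..n}"
      have cc: "conv c c (n - i) = conv ?t ?t (n - i)"
        by (rule conv_trunc_eq[of c, OF c0]) simp
      show "(c i + (if i = 1 then 1 else 0)) * ((if n - i = 0 then 1 else 0) + conv c c (n - i)) -
         (?t i + (if i = 1 then 1 else 0)) * ((if n - i = 0 then 1 else 0) + conv ?t ?t (n - i)) =
         (if i = n then c n else 0)"
      proof (cases "i = n")
        case True
        have "conv c c 0 = 0" using c0 by (simp add: conv_def)
        then show ?thesis using True n by (simp add: trunc_def)
      next
        case False
        then have "i < n" using i by auto
        then show ?thesis using False cc by (simp add: trunc_def)
      qed
    qed
    also have "\<dots> = c n" by simp
    finally show ?thesis .
  qed
  show ?thesis
    unfolding Ecoef_def using A B by (simp add: algebra_simps)
qed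


function cf :: "nat \<Rightarrow> real" where
  "cf n = (if n = 0 then 0 else if n = 1 then aa else
      - Ecoef (\<lambda>k. if k < n then cf k else 0) n / (real (n+1) * (2*aa - 1)))"
  by auto
termination by (relation "Wellfounded.measure id") auto

declare cf.simps[simp del]

lemma cf0: "cf 0 = 0" by (simp add: cf.simps)
lemma cf1: "cf 1 = aa" by (simp add: cf.simps)
lemma cf1': "cf (Suc 0) = aa" using cf1 by simp
lemma cfn: "2 \<le> n \<Longrightarrow> cf n = - Ecoef (trunc cf n) n / (real (n+1) * (2*aa - 1))"
  by (subst cf.simps) (simp add: trunc_def)

lemma aa_lin: "2*aa - 1 = - sqrt 3" by (simp add: aa_def field_simps)
lemma aa_quad: "aa * (2*aa - 1) = aa + 1"
proof -
  have "sqrt 3 * sqrt 3 = 3" by simp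
  then show ?thesis unfolding aa_def by (simp add: field_simps)
qed

lemma Ecoef_cf: "Ecoef cf n = 0"
proof -
  consider "n = 0" | "n = 1" | "2 \<le> n" by linarith
  then show ?thesis
  proof cases
    case 1 then show ?thesis by (simp add: Ecoef_def conv_def cf0)
  next
    case 2 then show ?thesis using aa_quad by (simp add: Ecoef_def conv_def cf0 cf1' algebra_simps)
  next
    case 3
    have D: "real (n+1) * (2*aa - 1) \<noteq> 0" using aa_lin by simp
    define D where "D = real (n+1) * (2*aa - 1)"
    have e: "Ecoef cf n = Ecoef (trunc cf n) n + D * cf n"
      using E_split[of cf n, OF cf0 cf1 3] unfolding D_def by simp
    have "cf n * D = - Ecoef (trunc cf n) n" using cfn[OF 3] D unfolding D_def by simp
    then show ?thesis using e by (simp add: algebra_simps)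
  qed
qed


lemma conv_nonneg: "(\<And>k. 0 \<le> u k) \<Longrightarrow> (\<And>k. 0 \<le> v k) \<Longrightarrow> 0 \<le> conv u v n"
  unfolding conv_def by (intro sum_nonneg mult_nonneg_nonneg) auto

lemma conv_mono:
  assumes "\<And>k. 0 \<le> u k" "\<And>k. u k \<le> u' k" "\<And>k. 0 \<le> v k" "\<And>k. v k \<le> v' k"
  shows "conv u v n \<le> conv u' v' n"
  unfolding conv_def by (intro sum_mono mult_mono) (auto intro: order_trans[OF assms(1) assms(2)] assms)

lemma sum_conv_le:
  assumes u: "\<And>k. 0 \<le> u k" and v: "\<And>k. 0 \<le> v k"
  shows "(\<Sum>n\<le>N. conv u v n) \<le> (\<Sum>k\<le>N. u k) * (\<Sum>k\<le>N. v k)"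
proof -
  have "(\<Sum>n\<le>N. conv u v n) = (\<Sum>(i,j)\<in>{(i,j). i+j \<le> N}. u i * v j)"
    unfolding conv_def by (rule sum.triangle_reindex_eq[symmetric])
  also have "\<dots> \<le> (\<Sum>(i,j)\<in>{..N}\<times>{..N}. u i * v j)"
    by (rule sum_mono2) (auto intro!: mult_nonneg_nonneg u v)
  also have "\<dots> = (\<Sum>k\<le>N. u k) * (\<Sum>k\<le>N. v k)"
    by (simp add: sum_product sum.cartesian_product)
  finally show ?thesis .
qed

lemma abs_conv: "\<bar>conv u v n\<bar> \<le> conv (\<lambda>k. \<bar>u k\<bar>) (\<lambda>k. \<bar>v k\<bar>) n"
  unfolding conv_def by (rule order_trans[OF sum_abs]) (simp add: abs_mult)

lemma conv_abs_sum: "\<bar>conv u v n\<bar> \<le> (\<Sum>i\<le>n. \<bar>u i * v (n-i)\<bar>)"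
  unfolding conv_def by (rule sum_abs)

lemma conv_scale: "conv (\<lambda>k. u k * r^k) (\<lambda>k. v k * r^k) n = conv u v n * r^n"
  unfolding conv_def sum_distrib_right
proof (rule sum.cong[OF refl])
  fix i assume "i \<in> {..n}"
  then have "r^i * r^(n-i) = r^n" by (simp add: power_add[symmetric])
  then show "u i * r ^ i * (v (n - i) * r ^ (n - i)) = u i * v (n - i) * r ^ n"
    by (metis (no_types, lifting) mult.assoc mult.left_commute)
qed

lemma sqrt3_ge: "1 \<le> sqrt (3::real)" by simp


lemma PB:
  fixes r :: real
  assumes r: "0 < r" and n: "2 \<le> n" "n \<le> N"
  defines "V \<equiv> (\<lambda>k. if k < N then \<bar>cf k\<bar> * r^k else 0)"
  defines "W \<equiv> (\<lambda>k. if 2 \<le> k \<and> k < N then \<bar>cf k\<bar> * r^k else 0)"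
  defines "X \<equiv> (\<lambda>k. V k + (if k = 1 then r else 0))"
  shows "\<bar>cf n\<bar> * r^n \<le> 2/r * conv W W (n+1) + conv X (conv V V) n"
proof -
  let ?t = "trunc cf n"
  define A where "A = conv (\<lambda>k. real (k+1) * ?t (k+1)) (\<lambda>k. 2 * ?t k - (if k = 1 then 1 else 0)) n"
  define B where "B = conv (\<lambda>k. ?t k + (if k=1 then 1 else 0)) (\<lambda>k. (if k=0 then 1 else 0) + conv ?t ?t k) n"
  have V0: "0 \<le> V k" for k using r by (simp add: V_def)
  have W0: "0 \<le> W k" for k using r by (simp add: W_def)
  have X0: "0 \<le> X k" for k using r V0[of k] by (simp add: X_def)
  have VV0: "0 \<le> conv V V k" for k by (rule conv_nonneg[OF V0 V0])
  have WW0: "0 \<le> conv W W k" for k by (rule conv_nonneg[OF W0 W0])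
  have tn: "?t n = 0" by (simp add: trunc_def)
  have Aterm: "\<bar>real (i+1) * ?t (i+1) * (2 * ?t (n-i) - (if n-i = 1 then 1 else 0))\<bar> * r^n
      \<le> 2 * real (n+1) / r * (W (Suc i) * W (n - i))" if i: "i \<le> n" for i
  proof -
    consider "i = 0" | "i + 1 = n" | "i = n" | "1 \<le> i" "i + 2 \<le> n" using i n by linarith
    then show ?thesis
    proof cases
      case 1 then show ?thesis using n r W0 by (simp add: trunc_def)
    next
      case 2 then show ?thesis using n r W0 by (simp add: trunc_def)
    next
      case 3 then show ?thesis using n r W0 by (simp add: trunc_def)
    next
      case 4
      have t1: "?t (i+1) = cf (i+1)" "?t (n-i) = cf (n-i)" using 4 by (auto simp: trunc_def)
      have ni: "n - i \<noteq> 1" using 4 by auto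
      have w1: "W (Suc i) = \<bar>cf (i+1)\<bar> * r^(i+1)" "W (n-i) = \<bar>cf (n-i)\<bar> * r^(n-i)"
        using 4 n by (auto simp: W_def)
      have ee: "(i+1) + (n-i) = Suc n" using 4 by simp
      have pw: "r^(i+1) * r^(n-i) = r^n * r" by (simp only: power_add[symmetric] ee power_Suc2)
      have "\<bar>real (i+1) * ?t (i+1) * (2 * ?t (n-i) - (if n-i = 1 then 1 else 0))\<bar> * r^n
          = 2 * real (i+1) * (\<bar>cf (i+1)\<bar> * \<bar>cf (n-i)\<bar>) * r^n"
        using ni t1 by (simp add: abs_mult)
      also have "\<dots> = 2 * real (i+1) / r * (W (Suc i) * W (n - i))"
      proof -
        have "W (Suc i) * W (n - i) = \<bar>cf (i+1)\<bar> * \<bar>cf (n-i)\<bar> * (r^(i+1) * r^(n-i))"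
          unfolding w1 by (simp only: ac_simps)
        then show ?thesis unfolding pw using r by (simp add: field_simps)
      qed
      also have "\<dots> \<le> 2 * real (n+1) / r * (W (Suc i) * W (n - i))"
        using i r W0 by (intro mult_right_mono divide_right_mono) (auto intro: mult_nonneg_nonneg)
      finally show ?thesis .
    qed
  qed
  have Abound: "\<bar>A\<bar> * r^n \<le> 2 * real (n+1) / r * conv W W (n+1)"
  proof -
    have "\<bar>A\<bar> * r^n \<le> (\<Sum>i\<le>n. \<bar>real (i+1) * ?t (i+1) * (2 * ?t (n-i) - (if n-i = 1 then 1 else 0))\<bar> * r^n)"
      unfolding A_def conv_def sum_distrib_right[symmetric] using r
      by (intro mult_right_mono sum_abs) auto
    also have "\<dots> \<le> (\<Sum>i\<le>n. 2 * real (n+1) / r * (W (Suc i) * W (n - i)))"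
      by (intro sum_mono Aterm) auto
    also have "\<dots> = 2 * real (n+1) / r * (\<Sum>i\<le>n. W (Suc i) * W (n+1 - Suc i))"
      by (simp add: sum_distrib_left)
    also have "(\<Sum>i\<le>n. W (Suc i) * W (n+1 - Suc i)) = conv W W (n+1)"
      unfolding conv_def Suc_eq_plus1[symmetric] sum.atMost_Suc_shift by (simp add: W_def)
    finally show ?thesis .
  qed
  have tV: "\<bar>?t k\<bar> * r^k \<le> V k" for k using n r by (auto simp: trunc_def V_def)
  have convt: "\<bar>conv ?t ?t m\<bar> * r^m \<le> conv V V m" for m
  proof -
    have "\<bar>conv ?t ?t m\<bar> * r^m = \<bar>conv ?t ?t m * r^m\<bar>" using r by (simp add: abs_mult)
    also have "\<dots> = \<bar>conv (\<lambda>k. ?t k * r^k) (\<lambda>k. ?t k * r^k) m\<bar>" by (simp add: conv_scale)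
    also have "\<dots> \<le> conv (\<lambda>k. \<bar>?t k * r^k\<bar>) (\<lambda>k. \<bar>?t k * r^k\<bar>) m" by (rule abs_conv)
    also have "\<dots> \<le> conv V V m"
      using r tV by (intro conv_mono) (auto simp: abs_mult)
    finally show ?thesis .
  qed
  have Bterm: "\<bar>(?t i + (if i=1 then 1 else 0)) * ((if n-i=0 then 1 else 0) + conv ?t ?t (n-i))\<bar> * r^n
      \<le> X i * conv V V (n - i)" if i: "i \<le> n" for i
  proof (cases "i = n")
    case True then show ?thesis using n tn X0 VV0 by (simp add: mult_nonneg_nonneg)
  next
    case False
    then have i': "i < n" using i by auto
    have pw: "r^n = r^i * r^(n-i)" using i by (simp add: power_add[symmetric])
    have x: "\<bar>?t i + (if i=1 then 1 else 0)\<bar> * r^i \<le> X i"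
    proof -
      have "\<bar>?t i + (if i=1 then 1 else 0)\<bar> * r^i \<le> (\<bar>?t i\<bar> + (if i=1 then 1 else 0)) * r^i"
        using r by (intro mult_right_mono) auto
      also have "\<dots> = \<bar>?t i\<bar> * r^i + (if i=1 then r else 0)" by (simp add: algebra_simps)
      also have "\<dots> \<le> X i" unfolding X_def using tV[of i] by simp
      finally show ?thesis .
    qed
    have "\<bar>(?t i + (if i=1 then 1 else 0)) * ((if n-i=0 then 1 else 0) + conv ?t ?t (n-i))\<bar> * r^n
        = (\<bar>?t i + (if i=1 then 1 else 0)\<bar> * r^i) * (\<bar>conv ?t ?t (n-i)\<bar> * r^(n-i))"
    proof -
      have "(?t i + (if i=1 then 1 else 0)) * ((if n-i=0 then 1 else 0) + conv ?t ?t (n-i))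
           = (?t i + (if i=1 then 1 else 0)) * conv ?t ?t (n-i)" using i' by simp
      then show ?thesis unfolding pw by (simp only: abs_mult ac_simps)
    qed
    also have "\<dots> \<le> X i * conv V V (n - i)"
      using x convt r by (intro mult_mono) (auto intro!: mult_nonneg_nonneg X0)
    finally show ?thesis .
  qed
  have Bbound: "\<bar>B\<bar> * r^n \<le> conv X (conv V V) n"
  proof -
    have "\<bar>B\<bar> * r^n \<le> (\<Sum>i\<le>n. \<bar>(?t i + (if i=1 then 1 else 0)) * ((if n-i=0 then 1 else 0) + conv ?t ?t (n-i))\<bar> * r^n)"
      unfolding B_def sum_distrib_right[symmetric] using r
      by (intro mult_right_mono conv_abs_sum) auto
    also have "\<dots> \<le> conv X (conv V V) n"
      unfolding conv_def[of X] by (intro sum_mono Bterm) auto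
    finally show ?thesis .
  qed
  have E: "Ecoef ?t n = A - B" unfolding Ecoef_def A_def B_def ..
  have D: "\<bar>real (n+1) * (2*aa - 1)\<bar> = real (n+1) * sqrt 3" using aa_lin by simp
  have "\<bar>cf n\<bar> * r^n = \<bar>A - B\<bar> * r^n / (real (n+1) * sqrt 3)"
    using cfn[OF n(1)] E D by (simp add: abs_divide abs_minus_commute)
  also have "\<dots> \<le> (\<bar>A\<bar> * r^n + \<bar>B\<bar> * r^n) / (real (n+1) * sqrt 3)"
  proof (intro divide_right_mono)
    have "\<bar>A - B\<bar> * r^n \<le> (\<bar>A\<bar> + \<bar>B\<bar>) * r^n" using r by (intro mult_right_mono abs_triangle_ineq4) auto
    then show "\<bar>A - B\<bar> * r^n \<le> \<bar>A\<bar> * r^n + \<bar>B\<bar> * r^n" by (simp add: algebra_simps)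
  qed simp
  also have "\<dots> \<le> (\<bar>A\<bar> * r^n + \<bar>B\<bar> * r^n) / real (n+1)"
    using r by (intro divide_left_mono) (auto intro!: mult_pos_pos)
  also have "\<dots> \<le> (2 * real (n+1) / r * conv W W (n+1) + conv X (conv V V) n) / real (n+1)"
    using Abound Bbound by (intro divide_right_mono) auto
  also have "\<dots> = 2/r * conv W W (n+1) + conv X (conv V V) n / real (n+1)"
    by (simp add: field_simps)
  also have "\<dots> \<le> 2/r * conv W W (n+1) + conv X (conv V V) n"
  proof -
    have "conv X (conv V V) n * 1 \<le> conv X (conv V V) n * real (n+1)"
      using conv_nonneg[of X "conv V V" n, OF X0 VV0] by (intro mult_left_mono) auto
    then show ?thesis by (simp add: divide_le_eq)
  qed
  finally show ?thesis .
qed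


lemma c3: "(1/10::real)^3 = 1/1000" by (simp add: power_divide)

lemma aa_abs: "\<bar>aa\<bar> \<le> 37/100"
proof -
  have "sqrt 3 \<le> sqrt ((174/100)^2::real)" by (subst real_sqrt_le_iff) (simp add: power2_eq_square)
  then have "sqrt 3 \<le> 174/100" by simp
  moreover have "1 \<le> sqrt (3::real)" by simp
  ultimately have h: "aa \<le> 0" "sqrt 3 \<le> 174/100" unfolding aa_def by auto
  have "- aa = (sqrt 3 - 1)/2" by (simp add: aa_def field_simps)
  also have "\<dots> \<le> 37/100" using h(2) by simp
  finally show ?thesis using h(1) by simp
qed

definition Ssum :: "nat \<Rightarrow> real" where
  "Ssum N = (\<Sum>k<N. if 2 \<le> k then \<bar>cf k\<bar> * (1/10)^k else 0)"

lemma Ssum_nonneg: "0 \<le> Ssum N" unfolding Ssum_def by (intro sum_nonneg) auto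

lemma num_bound:
  fixes s a :: real
  assumes s: "0 \<le> s" "s \<le> 1/1000" and a: "0 \<le> a" "a \<le> 37/100"
  shows "2/(1/10) * s^2 + (a*(1/10) + s + 1/10) * (a*(1/10) + s)^2 \<le> (1/10)^3"
proof -
  define A where "A = a*(1/10) + s"
  have A: "0 \<le> A" "A \<le> 38/1000" using s a unfolding A_def by auto
  have "A*A \<le> (38/1000)*(38/1000)" using A by (intro mult_mono) auto
  moreover have "(A + 1/10) * (A*A) \<le> (138/1000) * ((38/1000)*(38/1000))"
    using A calculation by (intro mult_mono) auto
  moreover have "s * s \<le> (1/1000)*(1/1000)" using s by (intro mult_mono) auto
  ultimately have "2/(1/10) * s^2 + (A + 1/10) * A^2 \<le> 1/1000"
    by (simp add: power2_eq_square)
  then show ?thesis unfolding A_def c3 by simp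
qed

lemma Ssum_bound: "Ssum N \<le> (1/10)^3"
proof (induction N)
  case 0 then show ?case by (simp add: Ssum_def)
next
  case (Suc N)
  define r :: real where "r = 1/10"
  have r: "0 < r" by (simp add: r_def)
  define V where "V \<equiv> (\<lambda>k. if k < N then \<bar>cf k\<bar> * r^k else 0)"
  define W where "W \<equiv> (\<lambda>k. if 2 \<le> k \<and> k < N then \<bar>cf k\<bar> * r^k else 0)"
  define X where "X \<equiv> (\<lambda>k. V k + (if k = 1 then r else 0))"
  define s where "s = Ssum N"
  have s: "0 \<le> s" "s \<le> 1/1000" using Suc.IH Ssum_nonneg unfolding s_def c3 by auto
  have V0: "0 \<le> V k" for k using r by (simp add: V_def)
  have W0: "0 \<le> W k" for k using r by (simp add: W_def)
  have X0: "0 \<le> X k" for k using r V0[of k] by (simp add: X_def)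
  have VV0: "0 \<le> conv V V k" for k by (rule conv_nonneg[OF V0 V0])
  have WW0: "0 \<le> conv W W k" for k by (rule conv_nonneg[OF W0 W0])
  have XVV0: "0 \<le> conv X (conv V V) k" for k by (rule conv_nonneg[OF X0 VV0])
  have sumW: "(\<Sum>k\<le>M. W k) = s" if "N \<le> M + 1" for M
  proof -
    have "(\<Sum>k\<le>M. W k) = (\<Sum>k<N. W k)"
      by (rule sum.mono_neutral_right) (use that in \<open>auto simp: W_def\<close>)
    also have "\<dots> = s" unfolding s_def Ssum_def r_def W_def by (rule sum.cong) auto
    finally show ?thesis .
  qed
  have sumV: "(\<Sum>k\<le>N. V k) \<le> \<bar>aa\<bar> * r + s"
  proof -
    have "(\<Sum>k\<le>N. V k) \<le> (\<Sum>k\<le>N. (if k = 1 then \<bar>aa\<bar> * r else 0) + W k)"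
    proof (rule sum_mono)
      fix k assume "k \<in> {..N}"
      show "V k \<le> (if k = 1 then \<bar>aa\<bar> * r else 0) + W k"
        using cf0 cf1 W0[of k] r by (cases "k = 0"; cases "k = 1") (auto simp: V_def W_def)
    qed
    also have "\<dots> = (\<Sum>k\<le>N. (if k = 1 then \<bar>aa\<bar> * r else 0)) + s"
      by (simp add: sum.distrib sumW)
    also have "(\<Sum>k\<le>N. (if k = 1 then \<bar>aa\<bar> * r else 0)) \<le> \<bar>aa\<bar> * r"
      using r by (simp add: sum.delta)
    finally show ?thesis by simp
  qed
  have sumX: "(\<Sum>k\<le>N. X k) \<le> \<bar>aa\<bar> * r + s + r"
  proof -
    have "(\<Sum>k\<le>N. X k) = (\<Sum>k\<le>N. V k) + (\<Sum>k\<le>N. (if k = 1 then r else 0))"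
      by (simp add: X_def sum.distrib)
    also have "(\<Sum>k\<le>N. (if k = 1 then r else 0)) \<le> r" using r by (simp add: sum.delta)
    finally show ?thesis using sumV by simp
  qed
  have step1: "Ssum (Suc N) \<le> (\<Sum>n\<le>N. 2/r * conv W W (Suc n) + conv X (conv V V) n)"
  proof -
    have "Ssum (Suc N) = (\<Sum>n\<le>N. if 2 \<le> n then \<bar>cf n\<bar> * r^n else 0)"
      unfolding Ssum_def r_def lessThan_Suc_atMost ..
    also have "\<dots> \<le> (\<Sum>n\<le>N. 2/r * conv W W (Suc n) + conv X (conv V V) n)"
    proof (rule sum_mono)
      fix n assume n: "n \<in> {..N}"
      show "(if 2 \<le> n then \<bar>cf n\<bar> * r^n else 0) \<le> 2/r * conv W W (Suc n) + conv X (conv V V) n"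
      proof (cases "2 \<le> n")
        case True
        then show ?thesis using PB[OF r True, of N] n unfolding V_def W_def X_def by simp
      next
        case False
        then show ?thesis using WW0[of "Suc n"] XVV0[of n] r by simp
      qed
    qed
    finally show ?thesis .
  qed
  have part1: "(\<Sum>n\<le>N. conv W W (Suc n)) \<le> s^2"
  proof -
    have "(\<Sum>n\<le>N. conv W W (Suc n)) \<le> conv W W 0 + (\<Sum>n\<le>N. conv W W (Suc n))"
      using WW0[of 0] by simp
    also have "\<dots> = (\<Sum>m\<le>Suc N. conv W W m)" by (simp only: sum.atMost_Suc_shift)
    also have "\<dots> \<le> (\<Sum>k\<le>Suc N. W k) * (\<Sum>k\<le>Suc N. W k)" by (rule sum_conv_le[OF W0 W0])
    also have "\<dots> = s^2" using sumW[of "Suc N"] by (simp add: power2_eq_square)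
    finally show ?thesis .
  qed
  have part2: "(\<Sum>n\<le>N. conv X (conv V V) n) \<le> (\<bar>aa\<bar> * r + s + r) * (\<bar>aa\<bar> * r + s)^2"
  proof -
    have "(\<Sum>n\<le>N. conv X (conv V V) n) \<le> (\<Sum>k\<le>N. X k) * (\<Sum>k\<le>N. conv V V k)"
      by (rule sum_conv_le[OF X0 VV0])
    also have "\<dots> \<le> (\<bar>aa\<bar> * r + s + r) * ((\<Sum>k\<le>N. V k) * (\<Sum>k\<le>N. V k))"
      using sumX sum_conv_le[of V V N, OF V0 V0] r s by (intro mult_mono) (auto intro!: sum_nonneg VV0 X0)
    also have "\<dots> \<le> (\<bar>aa\<bar> * r + s + r) * (\<bar>aa\<bar> * r + s)^2"
      using sumV s r unfolding power2_eq_square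
      by (intro mult_left_mono mult_mono) (auto intro!: sum_nonneg V0)
    finally show ?thesis .
  qed
  have "Ssum (Suc N) \<le> 2/r * s^2 + (\<bar>aa\<bar> * r + s + r) * (\<bar>aa\<bar> * r + s)^2"
  proof -
    have "(\<Sum>n\<le>N. 2/r * conv W W (Suc n) + conv X (conv V V) n)
        = 2/r * (\<Sum>n\<le>N. conv W W (Suc n)) + (\<Sum>n\<le>N. conv X (conv V V) n)"
      by (simp add: sum.distrib sum_distrib_left)
    also have "\<dots> \<le> 2/r * s^2 + (\<bar>aa\<bar> * r + s + r) * (\<bar>aa\<bar> * r + s)^2"
      using part1 part2 r by (intro add_mono mult_left_mono) auto
    finally show ?thesis using step1 by simp
  qed
  also have "\<dots> \<le> (1/10)^3" unfolding r_def using num_bound[OF s abs_ge_zero aa_abs] by simp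
  finally show ?case .
qed

lemma cf_bound: "\<bar>cf k\<bar> * (1/10)^k \<le> 1"
proof (cases "2 \<le> k")
  case True
  have "\<bar>cf k\<bar> * (1/10)^k = (if 2 \<le> k then \<bar>cf k\<bar> * (1/10)^k else 0)" using True by simp
  also have "\<dots> \<le> Ssum (Suc k)" unfolding Ssum_def
    by (rule member_le_sum) auto
  also have "\<dots> \<le> 1" using Ssum_bound[of "Suc k"] unfolding c3 by simp
  finally show ?thesis .
next
  case False
  then have "k = 0 \<or> k = 1" by auto
  then show ?thesis using cf0 cf1 aa_abs by auto
qed


definition R0 :: real where "R0 = 1/10"

lemma geom_summable:
  fixes c :: "nat \<Rightarrow> real" and x M :: real
  assumes c: "\<And>k. \<bar>c k\<bar> \<le> M * 10^k" and x: "\<bar>x\<bar> < 1/10"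
  shows "summable (\<lambda>k. c k * x^k)"
proof (rule summable_comparison_test'[of "\<lambda>k. M * (10*\<bar>x\<bar>)^k" 0])
  have "\<bar>10 * x\<bar> < 1" using x by simp
  then have "summable (\<lambda>k. (10 * \<bar>x\<bar>)^k)" by (intro summable_geometric) (simp add: abs_mult)
  then show "summable (\<lambda>k. M * (10 * \<bar>x\<bar>)^k)" by (rule summable_mult)
  show "norm (c n * x ^ n) \<le> M * (10 * \<bar>x\<bar>) ^ n" for n
  proof -
    have "norm (c n * x ^ n) = \<bar>c n\<bar> * \<bar>x\<bar>^n" by (simp add: abs_mult power_abs)
    also have "\<dots> \<le> M * 10^n * \<bar>x\<bar>^n" by (intro mult_right_mono c) auto
    also have "\<dots> = M * (10 * \<bar>x\<bar>) ^ n" by (simp add: power_mult_distrib)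
    finally show ?thesis .
  qed
qed

lemma cf_le: "\<bar>cf k\<bar> \<le> 1 * 10^k"
proof -
  have "\<bar>cf k\<bar> * (1/10)^k \<le> 1" by (rule cf_bound)
  then show ?thesis by (simp add: power_divide field_simps)
qed

definition ef :: "nat \<Rightarrow> real" where "ef k = (if k = 0 then 0 else cf (k - 1) / real k)"

lemma ef_le: "\<bar>ef k\<bar> \<le> 1 * 10^k"
proof (cases k)
  case 0 then show ?thesis by (simp add: ef_def)
next
  case (Suc m)
  have "\<bar>ef k\<bar> = \<bar>cf m\<bar> / real (Suc m)" using Suc by (simp add: ef_def)
  also have "\<dots> \<le> \<bar>cf m\<bar>"
  proof -
    have "\<bar>cf m\<bar> * 1 \<le> \<bar>cf m\<bar> * real (Suc m)" by (intro mult_left_mono) auto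
    then show ?thesis by (simp add: divide_le_eq)
  qed
  also have "\<dots> \<le> 10^m" using cf_le[of m] by simp
  also have "\<dots> \<le> 10^k" using Suc by simp
  finally show ?thesis by simp
qed

lemma diffs_ef: "diffs ef = cf"
  by (rule ext) (simp add: diffs_def ef_def)

definition Dfs :: "nat \<Rightarrow> real \<Rightarrow> real" where
  "Dfs n x = (\<Sum>k. (diffs ^^ n) ef k * x^k)"

lemma Dfs_summable: "\<bar>x\<bar> < 1/10 \<Longrightarrow> summable (\<lambda>k. (diffs ^^ n) ef k * x^k)"
proof (induction n arbitrary: x)
  case 0 then show ?case using geom_summable[OF ef_le] by simp
next
  case (Suc n)
  have "summable (\<lambda>k. diffs ((diffs ^^ n) ef) k * x^k)"
    by (rule termdiff_converges[where K="1/10"]) (use Suc in auto)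
  then show ?case by simp
qed

lemma Dfs_deriv: "\<bar>x\<bar> < 1/10 \<Longrightarrow> (Dfs n has_real_derivative Dfs (Suc n) x) (at x)"
  unfolding Dfs_def
  using termdiffs_strong'[of "1/10" "(diffs ^^ n) ef" x] Dfs_summable by simp

lemma Dfs1: "Dfs 1 x = (\<Sum>k. cf k * x^k)" by (simp add: Dfs_def diffs_ef)
lemma diffs2: "(diffs ^^ 2) ef = (\<lambda>k. real (k+1) * cf (k+1))"
proof -
  have "(diffs ^^ 2) ef = diffs cf" by (simp add: numeral_2_eq_2 diffs_ef)
  then show ?thesis by (simp add: diffs_def)
qed
lemma Dfs2: "Dfs 2 x = (\<Sum>k. (real (k+1) * cf (k+1)) * x^k)"
  unfolding Dfs_def diffs2 ..
lemma Dfs1_0: "Dfs 1 0 = 0" unfolding Dfs1 by (simp add: cf0)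

lemma abs_summ:
  assumes "\<And>y. \<bar>y\<bar> < R \<Longrightarrow> summable (\<lambda>k. c k * y^k)" and "\<bar>x\<bar> < (R::real)"
  shows "summable (\<lambda>k. norm (c k * x^k))"
proof -
  define y where "y = (\<bar>x\<bar> + R)/2"
  have "\<bar>y\<bar> < R" "norm x < norm y" using assms(2) by (auto simp: y_def)
  then show ?thesis using powser_insidea[OF assms(1)] by blast
qed

lemma CP_sums:
  assumes u: "\<And>y. \<bar>y\<bar> < R \<Longrightarrow> summable (\<lambda>k. u k * y^k)"
    and v: "\<And>y. \<bar>y\<bar> < R \<Longrightarrow> summable (\<lambda>k. v k * y^k)" and x: "\<bar>x\<bar> < (R::real)"
  shows "(\<lambda>k. conv u v k * x^k) sums ((\<Sum>k. u k * x^k) * (\<Sum>k. v k * x^k))"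
proof -
  have "(\<lambda>k. \<Sum>i\<le>k. (u i * x^i) * (v (k-i) * x^(k-i))) sums ((\<Sum>k. u k * x^k) * (\<Sum>k. v k * x^k))"
    by (rule Cauchy_product_sums[OF abs_summ[OF u x] abs_summ[OF v x]])
  moreover have "(\<Sum>i\<le>k. (u i * x^i) * (v (k-i) * x^(k-i))) = conv u v k * x^k" for k
    unfolding conv_def sum_distrib_right
  proof (rule sum.cong[OF refl])
    fix i assume "i \<in> {..k}"
    then have "x^i * x^(k-i) = x^k" by (simp add: power_add[symmetric])
    then show "u i * x ^ i * (v (k - i) * x ^ (k - i)) = u i * v (k - i) * x ^ k"
      by (metis (no_types, lifting) mult.assoc mult.left_commute)
  qed
  ultimately show ?thesis by simp
qed

lemma ODE_series:
  assumes x: "\<bar>x\<bar> < 1/10"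
  shows "Dfs 2 x * (2 * Dfs 1 x - x) = (x + Dfs 1 x) * (1 + (Dfs 1 x)^2)"
proof -
  define R :: real where "R = 1/10"
  have xR: "\<bar>x\<bar> < R" using x by (simp add: R_def)
  define dc where "dc = (\<lambda>k. real (k+1) * cf (k+1))"
  define b where "b = (\<lambda>k. 2 * cf k - (if k = 1 then 1 else 0))"
  define s where "s = (\<lambda>k. cf k + (if k = 1 then 1 else 0))"
  define q where "q = (\<lambda>k. (if k = 0 then 1 else 0) + conv cf cf k)"
  define P where "P = (\<lambda>y. \<Sum>k. cf k * y^k)"
  have cfs: "\<bar>y\<bar> < R \<Longrightarrow> (\<lambda>k. cf k * y^k) sums P y" for y
    unfolding P_def R_def using Dfs_summable[of y 1] by (simp add: diffs_ef summable_sums)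
  have cfsum: "\<bar>y\<bar> < R \<Longrightarrow> summable (\<lambda>k. cf k * y^k)" for y using cfs sums_summable by blast
  have dcs: "\<bar>y\<bar> < R \<Longrightarrow> (\<lambda>k. dc k * y^k) sums Dfs 2 y" for y
    unfolding dc_def Dfs2 R_def using Dfs_summable[of y 2] unfolding diffs2
    by (simp add: summable_sums)
  have d1: "(\<lambda>k. (if k = 1 then 1 else 0) * y^k) sums y" for y :: real
    using powser_sums_if[of 1 y] by simp
  have d0: "(\<lambda>k. (if k = 0 then 1 else 0) * y^k) sums 1" for y :: real
    using powser_sums_if[of 0 y] by simp
  have bs: "\<bar>y\<bar> < R \<Longrightarrow> (\<lambda>k. b k * y^k) sums (2 * P y - y)" for y
  proof -
    assume "\<bar>y\<bar> < R"
    have "(\<lambda>k. 2 * (cf k * y^k) - (if k = 1 then 1 else 0) * y^k) sums (2 * P y - y)"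
      by (intro sums_diff sums_mult cfs d1) fact
    then show ?thesis unfolding b_def by (simp add: algebra_simps)
  qed
  have ss: "\<bar>y\<bar> < R \<Longrightarrow> (\<lambda>k. s k * y^k) sums (P y + y)" for y
  proof -
    assume "\<bar>y\<bar> < R"
    have "(\<lambda>k. cf k * y^k + (if k = 1 then 1 else 0) * y^k) sums (P y + y)"
      by (intro sums_add cfs d1) fact
    then show ?thesis unfolding s_def by (simp add: algebra_simps)
  qed
  have qs: "\<bar>y\<bar> < R \<Longrightarrow> (\<lambda>k. q k * y^k) sums (1 + P y * P y)" for y
  proof -
    assume y: "\<bar>y\<bar> < R"
    have "(\<lambda>k. conv cf cf k * y^k) sums (P y * P y)"
      using CP_sums[OF cfsum cfsum y] unfolding P_def .
    then have "(\<lambda>k. (if k = 0 then 1 else 0) * y^k + conv cf cf k * y^k) sums (1 + P y * P y)"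
      by (intro sums_add d0)
    then show ?thesis unfolding q_def by (simp add: algebra_simps)
  qed
  have sm: "\<And>f S. (\<And>y. \<bar>y\<bar> < R \<Longrightarrow> (\<lambda>k. f k * y^k) sums S y) \<Longrightarrow> (\<And>y. \<bar>y\<bar> < R \<Longrightarrow> summable (\<lambda>k. f k * y^k))"
    using sums_summable by blast
  have L: "(\<lambda>k. conv dc b k * x^k) sums (Dfs 2 x * (2 * P x - x))"
    using CP_sums[OF sm[OF dcs] sm[OF bs] xR] dcs[OF xR] bs[OF xR] by (simp add: sums_unique[symmetric])
  have Rr: "(\<lambda>k. conv s q k * x^k) sums ((P x + x) * (1 + P x * P x))"
    using CP_sums[OF sm[OF ss] sm[OF qs] xR] ss[OF xR] qs[OF xR] by (simp add: sums_unique[symmetric])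
  have "(\<lambda>k. conv dc b k * x^k - conv s q k * x^k) sums (Dfs 2 x * (2 * P x - x) - (P x + x) * (1 + P x * P x))"
    by (rule sums_diff[OF L Rr])
  moreover have "(\<lambda>k. conv dc b k * x^k - conv s q k * x^k) = (\<lambda>k. 0)"
  proof
    fix k
    have "Ecoef cf k = 0" by (rule Ecoef_cf)
    then have "conv dc b k = conv s q k" unfolding Ecoef_def dc_def b_def s_def q_def by simp
    then show "conv dc b k * x^k - conv s q k * x^k = 0" by simp
  qed
  ultimately have "Dfs 2 x * (2 * P x - x) - (P x + x) * (1 + P x * P x) = 0"
    using sums_unique2 sums_zero by fastforce
  moreover have "Dfs 1 x = P x" unfolding Dfs1 P_def ..
  ultimately show ?thesis by (simp add: power2_eq_square algebra_simps)
qed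


lemma v3_eq: "(vector [a,b,c] :: real^3) = vector [d,e,f] \<longleftrightarrow> a = d \<and> b = e \<and> c = f"
  by (simp add: vec_eq_iff forall_3)

lemma v3_inner: "(vector [a,b,c] :: real^3) \<bullet> vector [d,e,f] = a*d + b*e + c*f"
  by (simp add: inner_vec_def sum_3)

lemma v3_scaleR: "r *\<^sub>R (vector [a,b,c] :: real^3) = vector [r*a, r*b, r*c]"
  by (simp add: vec_eq_iff forall_3)

lemma v3_add: "(vector [a,b,c] :: real^3) + vector [d,e,f] = vector [a+d, b+e, c+f]"
  by (simp add: vec_eq_iff forall_3)

lemma v3_diff: "(vector [a,b,c] :: real^3) - vector [d,e,f] = vector [a-d, b-e, c-f]"
  by (simp add: vec_eq_iff forall_3)

lemma v3_cross: "cross3 (vector [a,b,c]) (vector [d,e,f]) = vector [b*f - c*e, c*d - a*f, a*e - b*d]"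
  by (simp add: cross3_def vec_eq_iff forall_3)

lemma v3_norm: "norm (vector [a,b,c] :: real^3) = sqrt (a*a + b*b + c*c)"
  by (simp add: norm_eq_sqrt_inner v3_inner)

lemma v3_decomp: "(vector [a,b,c] :: real^3) = a *\<^sub>R vector [1,0,0] + b *\<^sub>R vector [0,1,0] + c *\<^sub>R vector [0,0,1]"
  by (simp add: vec_eq_iff forall_3)

lemma v3_deriv:
  assumes "(f1 has_real_derivative d1) F" "(f2 has_real_derivative d2) F" "(f3 has_real_derivative d3) F"
  shows "((\<lambda>s. vector [f1 s, f2 s, f3 s] :: real^3) has_vector_derivative vector [d1, d2, d3]) F"
proof -
  have "((\<lambda>s. f1 s *\<^sub>R (vector [1,0,0]::real^3) + f2 s *\<^sub>R vector [0,1,0] + f3 s *\<^sub>R vector [0,0,1])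
     has_vector_derivative (d1 *\<^sub>R vector [1,0,0] + d2 *\<^sub>R vector [0,1,0] + d3 *\<^sub>R vector [0,0,1])) F"
    using assms unfolding has_real_derivative_iff_has_vector_derivative
    by (intro has_vector_derivative_add bounded_linear.has_vector_derivative[OF bounded_linear_scaleR_left]) 
  then show ?thesis by (simp only: v3_decomp[symmetric])
qed


definition XU :: "(real \<Rightarrow> real) \<Rightarrow> real \<Rightarrow> real \<Rightarrow> real^3" where
  "XU p u v = vector [cos v, sin v, p u]"
definition XV :: "real \<Rightarrow> real \<Rightarrow> real^3" where
  "XV u v = vector [- u * sin v, u * cos v, 0]"
definition NN :: "(real \<Rightarrow> real) \<Rightarrow> real \<Rightarrow> real \<Rightarrow> real^3" where
  "NN p u v = vector [- p u * cos v, - p u * sin v, 1]"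

definition connA :: "real \<Rightarrow> real \<Rightarrow> real \<Rightarrow> real \<Rightarrow> real \<Rightarrow> real \<Rightarrow> real \<Rightarrow> real \<Rightarrow> real" where
  "connA pu qu a b al al' be u = a*(al' + al*pu*qu/(1+pu^2)) - b*be*u/(1+pu^2) + a*pu*al"
definition connB :: "real \<Rightarrow> real \<Rightarrow> real \<Rightarrow> real \<Rightarrow> real \<Rightarrow> real \<Rightarrow> real \<Rightarrow> real" where
  "connB pu a b al be be' u = a*(be' + be/u) + b*al/u + b*pu*al"

locale surf =
  fixes f p q rr :: "real \<Rightarrow> real" and U :: "real set"
  assumes U_open: "open U" and U_pos: "\<And>u. u \<in> U \<Longrightarrow> 0 < u"
    and df: "\<And>u. u \<in> U \<Longrightarrow> (f has_real_derivative p u) (at u)"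
    and dp: "\<And>u. u \<in> U \<Longrightarrow> (p has_real_derivative q u) (at u)"
    and dq: "\<And>u. u \<in> U \<Longrightarrow> (q has_real_derivative rr u) (at u)"
begin

abbreviation "X \<equiv> rot_surface f"

lemma pd1X: "u \<in> U \<Longrightarrow> pd1 X u v = XU p u v"
  unfolding pd1_def rot_surface_def XU_def
  by (rule vector_derivative_at, rule v3_deriv) (auto intro!: derivative_eq_intros df)

lemma pd2X: "pd2 X u v = XV u v"
  unfolding pd2_def rot_surface_def XV_def
  by (rule vector_derivative_at, rule v3_deriv) (auto intro!: derivative_eq_intros)

lemma unit_normal_X:
  assumes u: "u \<in> U"
  shows "unit_normal X u v = (1 / sqrt (1 + (p u)^2)) *\<^sub>R NN p u v"
proof -
  have u0: "0 < u" using U_pos[OF u] .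
  have sc: "sin v * sin v + cos v * cos v = 1" using sin_cos_squared_add[of v] by (simp add: power2_eq_square)
  have cr: "cross3 (pd1 X u v) (pd2 X u v) = u *\<^sub>R NN p u v"
    unfolding pd1X[OF u] pd2X XU_def XV_def NN_def v3_cross v3_scaleR v3_eq
  proof -
    have "cos v * (u * cos v) - sin v * (- u * sin v) = u * (sin v * sin v + cos v * cos v)" by algebra
    then show "sin v * 0 - p u * (u * cos v) = u * (- p u * cos v) \<and>
      p u * (- u * sin v) - cos v * 0 = u * (- p u * sin v) \<and>
      cos v * (u * cos v) - sin v * (- u * sin v) = u * 1" using sc by simp
  qed
  have nN: "norm (NN p u v) = sqrt (1 + (p u)^2)"
    unfolding NN_def v3_norm using sc
  proof -
    have "- p u * cos v * (- p u * cos v) + - p u * sin v * (- p u * sin v) + 1 * 1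
      = (p u * p u) * (sin v * sin v + cos v * cos v) + 1" by algebra
    then show "sqrt (- p u * cos v * (- p u * cos v) + - p u * sin v * (- p u * sin v) + 1 * 1) = sqrt (1 + (p u)^2)"
      using sc by (simp add: power2_eq_square)
  qed
  have nr: "norm (cross3 (pd1 X u v) (pd2 X u v)) = u * sqrt (1 + (p u)^2)"
    unfolding cr using u0 by (simp add: nN)
  have "1 / (u * sqrt (1 + (p u)^2)) * u = 1 / sqrt (1 + (p u)^2)" using u0 by simp
  then show ?thesis unfolding unit_normal_def cr scaleR_scaleR using u0 by (simp add: nN)
qed

lemma tang_X:
  assumes u: "u \<in> U"
  shows "tang X u v (z1 *\<^sub>R XU p u v + z2 *\<^sub>R XV u v + z3 *\<^sub>R NN p u v) = z1 *\<^sub>R XU p u v + z2 *\<^sub>R XV u v"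
proof -
  have sc: "sin v * sin v + cos v * cos v = 1" using sin_cos_squared_add[of v] by (simp add: power2_eq_square)
  have pos: "0 < 1 + (p u)^2" by (simp add: add_pos_nonneg)
  define w where "w = z1 *\<^sub>R XU p u v + z2 *\<^sub>R XV u v + z3 *\<^sub>R NN p u v"
  have i: "w \<bullet> NN p u v = z3 * (1 + (p u)^2)"
    unfolding w_def XU_def XV_def NN_def v3_scaleR v3_add v3_inner
  proof -
    have "(z1 * cos v + z2 * (- u * sin v) + z3 * (- p u * cos v)) * (- p u * cos v) +
        (z1 * sin v + z2 * (u * cos v) + z3 * (- p u * sin v)) * (- p u * sin v) +
        (z1 * p u + z2 * 0 + z3 * 1) * 1 =
        (z3 * p u * p u - z1 * p u) * (sin v * sin v + cos v * cos v) + z1 * p u + z3" by algebra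
    then show "(z1 * cos v + z2 * (- u * sin v) + z3 * (- p u * cos v)) * (- p u * cos v) +
        (z1 * sin v + z2 * (u * cos v) + z3 * (- p u * sin v)) * (- p u * sin v) +
        (z1 * p u + z2 * 0 + z3 * 1) * 1 = z3 * (1 + (p u)^2)"
      using sc by (simp add: power2_eq_square algebra_simps)
  qed
  have "(w \<bullet> unit_normal X u v) *\<^sub>R unit_normal X u v = ((w \<bullet> NN p u v) / (1 + (p u)^2)) *\<^sub>R NN p u v"
    unfolding unit_normal_X[OF u] using pos
    by (simp add: inner_scaleR_right real_sqrt_mult[symmetric] power2_eq_square[symmetric])
  also have "\<dots> = z3 *\<^sub>R NN p u v" unfolding i using pos by simp
  finally show ?thesis unfolding tang_def w_def[symmetric] by (simp add: w_def)
qed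


lemma dXU1: "((\<lambda>s. XU p s v) has_vector_derivative vector [0, 0, q u]) (at u)" if "u \<in> U"
  unfolding XU_def by (rule v3_deriv) (auto intro!: derivative_eq_intros dp that)

lemma dXV1: "((\<lambda>s. XV s v) has_vector_derivative vector [- sin v, cos v, 0]) (at u)"
  unfolding XV_def by (rule v3_deriv) (auto intro!: derivative_eq_intros)

lemma dXU2: "((\<lambda>s. XU p u s) has_vector_derivative vector [- sin v, cos v, 0]) (at v)"
  unfolding XU_def by (rule v3_deriv) (auto intro!: derivative_eq_intros)

lemma dXV2: "((\<lambda>s. XV u s) has_vector_derivative vector [- u * cos v, - u * sin v, 0]) (at v)"
  unfolding XV_def by (rule v3_deriv) (auto intro!: derivative_eq_intros)

lemma conn:
  assumes u: "u \<in> U"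
    and Wf: "\<And>u' v'. u' \<in> U \<Longrightarrow> Wf u' v' = \<alpha> u' *\<^sub>R XU p u' v' + \<beta> u' *\<^sub>R XV u' v'"
    and da: "(\<alpha> has_real_derivative \<alpha>') (at u)" and db: "(\<beta> has_real_derivative \<beta>') (at u)"
  shows "ind_conn e_z X a b Wf u v
     = connA (p u) (q u) a b (\<alpha> u) \<alpha>' (\<beta> u) u *\<^sub>R XU p u v + connB (p u) a b (\<alpha> u) (\<beta> u) \<beta>' u *\<^sub>R XV u v"
proof -
  have u0: "0 < u" using U_pos[OF u] .
  have pos: "0 < 1 + (p u)^2" by (simp add: add_pos_nonneg)
  have h1: "pd1 Wf u v = (\<alpha> u *\<^sub>R vector [0, 0, q u] + \<alpha>' *\<^sub>R XU p u v) + (\<beta> u *\<^sub>R vector [- sin v, cos v, 0] + \<beta>' *\<^sub>R XV u v)"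
    unfolding pd1_def
  proof (rule vector_derivative_at)
    have "((\<lambda>s. \<alpha> s *\<^sub>R XU p s v + \<beta> s *\<^sub>R XV s v) has_vector_derivative
        (\<alpha> u *\<^sub>R vector [0, 0, q u] + \<alpha>' *\<^sub>R XU p u v) + (\<beta> u *\<^sub>R vector [- sin v, cos v, 0] + \<beta>' *\<^sub>R XV u v)) (at u)"
      by (intro has_vector_derivative_add has_vector_derivative_scaleR da db dXU1[OF u] dXV1)
    then show "((\<lambda>s. Wf s v) has_vector_derivative
        (\<alpha> u *\<^sub>R vector [0, 0, q u] + \<alpha>' *\<^sub>R XU p u v) + (\<beta> u *\<^sub>R vector [- sin v, cos v, 0] + \<beta>' *\<^sub>R XV u v)) (at u)"
      by (rule has_vector_derivative_transform_within_open[OF _ U_open u]) (simp add: Wf)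
  qed
  have h2: "pd2 Wf u v = \<alpha> u *\<^sub>R vector [- sin v, cos v, 0] + \<beta> u *\<^sub>R vector [- u * cos v, - u * sin v, 0]"
    unfolding pd2_def
  proof (rule vector_derivative_at)
    have e: "(\<lambda>s. Wf u s) = (\<lambda>s. \<alpha> u *\<^sub>R XU p u s + \<beta> u *\<^sub>R XV u s)" using Wf[OF u] by auto
    show "((\<lambda>s. Wf u s) has_vector_derivative \<alpha> u *\<^sub>R vector [- sin v, cos v, 0] + \<beta> u *\<^sub>R vector [- u * cos v, - u * sin v, 0]) (at v)"
      unfolding e
      using has_vector_derivative_add[OF has_vector_derivative_scaleR[OF DERIV_const dXU2] has_vector_derivative_scaleR[OF DERIV_const dXV2]]
      by simp
  qed
  have h3: "coord_field X a b u v = a *\<^sub>R XU p u v + b *\<^sub>R XV u v"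
    unfolding coord_field_def pd1X[OF u] pd2X ..
  have h4: "e_z (X u v) \<bullet> Wf u v = \<alpha> u * p u"
    unfolding Wf[OF u] e_z_def XU_def XV_def v3_scaleR v3_add v3_inner by simp
  define z3 where "z3 = (a * \<alpha> u * q u + b * \<beta> u * u * p u) / (1 + (p u)^2)"
  have Z: "a *\<^sub>R pd1 Wf u v + b *\<^sub>R pd2 Wf u v + (e_z (X u v) \<bullet> Wf u v) *\<^sub>R coord_field X a b u v
     = connA (p u) (q u) a b (\<alpha> u) \<alpha>' (\<beta> u) u *\<^sub>R XU p u v + connB (p u) a b (\<alpha> u) (\<beta> u) \<beta>' u *\<^sub>R XV u v + z3 *\<^sub>R NN p u v"
  proof -
    define W2 where "W2 = 1 + (p u)^2"
    have W2: "W2 \<noteq> 0" using pos unfolding W2_def by simp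
    show ?thesis
      unfolding h1 h2 h3 h4 connA_def connB_def z3_def XU_def XV_def NN_def v3_scaleR v3_add v3_eq W2_def[symmetric]
      using u0 W2 apply (simp add: field_simps)
      unfolding W2_def by (simp add: algebra_simps power2_eq_square)
  qed
  show ?thesis unfolding ind_conn_def Z tang_X[OF u] ..
qed

end


definition gdv :: "real \<Rightarrow> real \<Rightarrow> real \<Rightarrow> real" where
  "gdv P Q Rr = ((Q*Q + P*Rr)*(1+P^2) - P*Q*(2*P*Q))/(1+P^2)^2"
definition hdv :: "real \<Rightarrow> real \<Rightarrow> real \<Rightarrow> real" where
  "hdv P Q u = ((1+P^2) - u*(2*P*Q))/(1+P^2)^2"
definition DA :: "real \<Rightarrow> real \<Rightarrow> real \<Rightarrow> real \<Rightarrow> real \<Rightarrow> real \<Rightarrow> real \<Rightarrow> real \<Rightarrow> real" where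
  "DA P Q Rr a b a' b' u = a*a'*gdv P Q Rr - b*b'*hdv P Q u + a*a'*Q"
definition DB :: "real \<Rightarrow> real \<Rightarrow> real \<Rightarrow> real \<Rightarrow> real \<Rightarrow> real \<Rightarrow> real \<Rightarrow> real" where
  "DB P Q a b a' b' u = - a*b'/u^2 - b*a'/u^2 + b*a'*Q"

context surf begin

lemma coordX: "u \<in> U \<Longrightarrow> coord_field X a b u v = a *\<^sub>R XU p u v + b *\<^sub>R XV u v"
  unfolding coord_field_def pd1X pd2X by simp

lemma inner1:
  assumes u: "u \<in> U"
  shows "ind_conn e_z X c d (coord_field X a' b') u v
     = connA (p u) (q u) c d a' 0 b' u *\<^sub>R XU p u v + connB (p u) c d a' b' 0 u *\<^sub>R XV u v"
  by (rule conn[OF u, of "coord_field X a' b'" "\<lambda>_. a'" "\<lambda>_. b'"]) (auto simp: coordX)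

lemma dA1:
  assumes u: "u \<in> U"
  shows "((\<lambda>s. connA (p s) (q s) c d a' 0 b' s) has_real_derivative DA (p u) (q u) (rr u) c d a' b' u) (at u)"
proof -
  have pos: "0 < 1 + (p u)^2" by (simp add: add_pos_nonneg)
  have "((\<lambda>s. c*(0 + a'*p s*q s/(1+(p s)^2)) - d*b' * s /(1+(p s)^2) + c*p s*a') has_real_derivative
     c*(0 + ((a'*q u*q u + a'*p u*rr u)*(1+(p u)^2) - a'*p u*q u*(2*p u*q u))/(1+(p u)^2)^2)
     - ((d*b')*(1+(p u)^2) - d*b'*u*(2*p u*q u))/(1+(p u)^2)^2 + c*q u*a') (at u)"
    using pos
    apply (auto intro!: derivative_eq_intros dp[OF u] dq[OF u] simp: power2_eq_square)
    apply (simp add: field_simps)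
    done
  then show ?thesis unfolding connA_def DA_def gdv_def hdv_def
    by (rule DERIV_cong) (use pos in \<open>simp add: field_simps power2_eq_square\<close>)
qed

lemma dB1:
  assumes u: "u \<in> U"
  shows "((\<lambda>s. connB (p s) c d a' b' 0 s) has_real_derivative DB (p u) (q u) c d a' b' u) (at u)"
proof -
  have u0: "0 < u" using U_pos[OF u] .
  have "((\<lambda>s. c*(0 + b'/s) + d*a'/s + d*p s*a') has_real_derivative
      c*(0 - b'/(u*u)) - d*a'/(u*u) + d*q u*a') (at u)"
    using u0 by (auto intro!: derivative_eq_intros dp[OF u] simp: field_simps power2_eq_square)
  then show ?thesis unfolding connB_def DB_def
    by (rule DERIV_cong) (use u0 in \<open>simp add: field_simps power2_eq_square\<close>)
qed

end


definition CE :: "real \<Rightarrow> real \<Rightarrow> real \<Rightarrow> real \<Rightarrow> real \<Rightarrow> real \<Rightarrow> real \<Rightarrow> real \<Rightarrow> real" where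
 "CE P Q Rr u a b c d =
  (connA P Q a b (connA P Q c d c 0 d u) (DA P Q Rr c d c d u) (connB P c d c d 0 u) u
   - connA P Q c d (connA P Q a b c 0 d u) (DA P Q Rr a b c d u) (connB P a b c d 0 u) u) * a * (1+P^2)
  + (connB P a b (connA P Q c d c 0 d u) (connB P c d c d 0 u) (DB P Q c d c d u) u
   - connB P c d (connA P Q a b c 0 d u) (connB P a b c d 0 u) (DB P Q a b c d u) u) * b * u^2"

definition Kgen :: "real \<Rightarrow> real \<Rightarrow> real \<Rightarrow> real \<Rightarrow> real \<Rightarrow> real \<Rightarrow> real \<Rightarrow> real" where
 "Kgen P Q u a b c d =
  (let p1 = a*P; p2 = c*P; W2 = 1+P^2; g11 = a^2*W2 + b^2*u^2; g22 = c^2*W2 + d^2*u^2;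
       g12 = a*c*W2 + b*d*u^2; H11 = a^2*Q + b^2*u*P; H22 = c^2*Q + d^2*u*P; H12 = a*c*Q + b*d*u*P in
   (1/2)*( p2*(p2*g11 - p1*g12) + p1*(p1*g22 - p2*g12) + 2*(H11*H22 - H12^2)/W2
           - (H22*g11 - 2*H12*g12 + H11*g22)/W2 ))"

lemma CE_Kgen:
  assumes u: "u \<noteq> 0"
  shows "(1/2) * (CE P Q Rr u a b c d + CE P Q Rr u c d a b) = Kgen P Q u a b c d"
proof -
  have W: "1 + P^2 \<noteq> 0" by (simp add: add_pos_nonneg add_nonneg_eq_0_iff)
  define iu where "iu = inverse u"
  define iw where "iw = inverse (1 + P^2)"
  have h1: "u * iu = 1" using u unfolding iu_def by simp
  have h2: "(1 + P^2) * iw = 1" using W unfolding iw_def by simp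
  show ?thesis
    unfolding CE_def Kgen_def Let_def connA_def connB_def DA_def DB_def gdv_def hdv_def
      divide_inverse power_inverse[symmetric] iu_def[symmetric] iw_def[symmetric]
    using h1 h2 by algebra
qed


context surf begin

lemma outer:
  assumes u: "u \<in> U"
  shows "ind_conn e_z X a b (ind_conn e_z X c d (coord_field X a' b')) u v
    = connA (p u) (q u) a b (connA (p u) (q u) c d a' 0 b' u) (DA (p u) (q u) (rr u) c d a' b' u) (connB (p u) c d a' b' 0 u) u *\<^sub>R XU p u v
    + connB (p u) a b (connA (p u) (q u) c d a' 0 b' u) (connB (p u) c d a' b' 0 u) (DB (p u) (q u) c d a' b' u) u *\<^sub>R XV u v"
  by (rule conn[OF u _ dA1[OF u] dB1[OF u]]) (rule inner1)

lemma inner_XX: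
  "(\<alpha> *\<^sub>R XU p u v + \<beta> *\<^sub>R XV u v) \<bullet> (a *\<^sub>R XU p u v + b *\<^sub>R XV u v) = \<alpha>*a*(1+(p u)^2) + \<beta>*b*u^2"
proof -
  have sc: "sin v * sin v + cos v * cos v = 1" using sin_cos_squared_add[of v] by (simp add: power2_eq_square)
  have "(\<alpha> * cos v + \<beta> * (- u * sin v)) * (a * cos v + b * (- u * sin v)) +
        (\<alpha> * sin v + \<beta> * (u * cos v)) * (a * sin v + b * (u * cos v)) + (\<alpha> * p u + \<beta> * 0) * (a * p u + b * 0)
      = (\<alpha>*a + \<beta>*b*u*u) * (sin v * sin v + cos v * cos v) + \<alpha>*a*(p u * p u)" by algebra
  then show ?thesis unfolding XU_def XV_def v3_scaleR v3_add v3_inner using sc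
    by (simp add: power2_eq_square algebra_simps)
qed

lemma comb_diff: "(x1 *\<^sub>R E1 + y1 *\<^sub>R E2) - (x2 *\<^sub>R E1 + y2 *\<^sub>R E2) = (x1 - x2) *\<^sub>R E1 + (y1 - y2) *\<^sub>R (E2::real^3)"
  by (simp add: algebra_simps)

lemma curv_dot:
  assumes u: "u \<in> U"
  shows "ind_curv e_z X a b c d (coord_field X c d) u v \<bullet> coord_field X a b u v = CE (p u) (q u) (rr u) u a b c d"
  unfolding ind_curv_def outer[OF u] coordX[OF u] CE_def
  by (simp only: comb_diff inner_XX)

end


lemma Kgen_half:
  assumes u: "u \<noteq> 0"
    and o1: "a*a*(1+P^2) + b*b*u^2 = 1" and o2: "c*c*(1+P^2) + d*d*u^2 = 1"
    and o3: "a*c*(1+P^2) + b*d*u^2 = 0"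
    and ode: "Q*(2*P - u) = (u + P)*(1+P^2)"
  shows "Kgen P Q u a b c d = 1/2"
proof -
  have W: "1 + P^2 \<noteq> 0" by (simp add: add_pos_nonneg add_nonneg_eq_0_iff)
  define iu where "iu = inverse u"
  define iw where "iw = inverse (1 + P^2)"
  have h1: "u * iu = 1" using u unfolding iu_def by simp
  have h2: "(1 + P^2) * iw = 1" using W unfolding iw_def by simp
  show ?thesis
    unfolding Kgen_def Let_def divide_inverse iw_def[symmetric]
    using h1 h2 o1 o2 o3 ode by algebra
qed

context surf begin

lemma sect_Kgen:
  assumes u: "u \<in> U"
  shows "sect_curv_expr e_z X a b c d u v = Kgen (p u) (q u) u a b c d"
proof -
  have "u \<noteq> 0" using U_pos[OF u] by simp
  then show ?thesis
    unfolding sect_curv_expr_def curv_dot[OF u] using CE_Kgen by simp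
qed

lemma const_curv:
  assumes ode: "\<And>u. u \<in> U \<Longrightarrow> q u * (2 * p u - u) = (u + p u) * (1 + (p u)^2)"
  shows "const_sect_curv e_z X (U \<times> UNIV) (1/2)"
proof -
  have key: "sect_curv_expr e_z X a b c d u v = 1/2"
    if u: "u \<in> U"
    and n1: "coord_field X a b u v \<bullet> coord_field X a b u v = 1"
    and n2: "coord_field X c d u v \<bullet> coord_field X c d u v = 1"
    and n3: "coord_field X a b u v \<bullet> coord_field X c d u v = 0" for u v a b c d
  proof -
  have "u \<noteq> 0" using U_pos[OF u] by simp
  moreover have "a*a*(1+(p u)^2) + b*b*u^2 = 1" using n1 unfolding coordX[OF u] inner_XX .
  moreover have "c*c*(1+(p u)^2) + d*d*u^2 = 1" using n2 unfolding coordX[OF u] inner_XX .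
  moreover have "a*c*(1+(p u)^2) + b*d*u^2 = 0" using n3 unfolding coordX[OF u] inner_XX .
  ultimately show "sect_curv_expr e_z X a b c d u v = 1/2"
    unfolding sect_Kgen[OF u] using Kgen_half ode[OF u] by blast
  qed
  show ?thesis unfolding const_sect_curv_def using key by auto
qed

end

interpretation S: surf "Dfs 0" "Dfs 1" "Dfs 2" "Dfs 3" "{0<..<1/20}"
proof
  show "open {0::real<..<1/20}" by simp
  show "\<And>u. u \<in> {0<..<1/20} \<Longrightarrow> 0 < (u::real)" by simp
  have D: "(Dfs n has_real_derivative Dfs (Suc n) u) (at u)" if "u \<in> {0<..<1/20}" for u n
    by (rule Dfs_deriv) (use that in auto)
  have e1: "Suc 0 = (1::nat)" and e2: "Suc 1 = (2::nat)" and e3: "Suc 2 = (3::nat)" by simp_all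
  show "\<And>u. u \<in> {0<..<1/20} \<Longrightarrow> (Dfs 0 has_real_derivative Dfs 1 u) (at u)"
    using D[of _ 0] unfolding e1 .
  show "\<And>u. u \<in> {0<..<1/20} \<Longrightarrow> (Dfs 1 has_real_derivative Dfs 2 u) (at u)"
    using D[of _ 1] unfolding e2 .
  show "\<And>u. u \<in> {0<..<1/20} \<Longrightarrow> (Dfs 2 has_real_derivative Dfs 3 u) (at u)"
    using D[of _ 2] unfolding e3 .
qed

theorem theorem4p5:
  shows "\<exists>eps > 0. \<exists>f :: real \<Rightarrow> real. \<exists>Df.
           smooth_upto0 eps f Df \<and> Df 1 0 = 0 \<and>
           const_sect_curv e_z (rot_surface f) ({0<..<eps} \<times> UNIV) (1/2)"
proof -
  have sm: "smooth_upto0 (1/20) (Dfs 0) Dfs"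
    unfolding smooth_upto0_def
  proof (intro conjI ballI allI)
    fix n and x :: real assume "x \<in> {0..<1/20}"
    then have xx: "\<bar>x\<bar> < 1/10" by auto
    show "(Dfs n has_real_derivative Dfs (Suc n) x) (at x within {0..<1/20})"
      using Dfs_deriv[OF xx] by (rule has_field_derivative_at_within)
  next
    fix x :: real show "Dfs 0 x = Dfs 0 x" ..
  qed
  have cc: "const_sect_curv e_z (rot_surface (Dfs 0)) ({0<..<1/20} \<times> UNIV) (1/2)"
  proof (rule S.const_curv)
    fix u :: real assume "u \<in> {0<..<1/20}"
    then have "\<bar>u\<bar> < 1/10" by auto
    then show "Dfs 2 u * (2 * Dfs 1 u - u) = (u + Dfs 1 u) * (1 + (Dfs 1 u)^2)" by (rule ODE_series)
  qed
  have pos: "(0::real) < 1/20" by simp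
  show ?thesis
    apply (rule exI[of _ "1/20"])
    apply (rule conjI[OF pos])
    apply (rule exI[of _ "Dfs 0"])
    apply (rule exI[of _ Dfs])
    using sm cc Dfs1_0 by blast
qed

end
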